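(* For every $n \in \mathbb{N}$, the $n^\text{th}$ Jones--Wenzl projector $\mathrm{j}_n \in \mathrm{End}_{\mathcal{TL}_0(\Bbbk)}([n])$ is idempotent: $\mathrm{j}_n^{2} = \mathrm{j}_n$.
   Context: Let $\Bbbk$ be a field and let $\mathcal{TL}_0(\Bbbk)$ be the strict $\Bbbk$-linear monoidal category with objects $[0],[1],[2],\ldots$ (where $[m]\otimes[n]=[m+n]$), whose morphisms are generated by $\mathrm{cup}\colon[0]\to[2]$ and $\mathrm{cap}\colon[2]\to[0]$ subject to the relations: the circle $\mathrm{cap}\circ\mathrm{cup}$ equals $\mathrm{id}_{[0]}$, and both zig-zags $(\mathrm{id}_{[1]}\otimes\mathrm{cap})\circ(\mathrm{cup}\otimes\mathrm{id}_{[1]})$ and $(\mathrm{cap}\otimes\mathrm{id}_{[1]})\circ(\mathrm{id}_{[1]}\otimes\mathrm{cup})$ equal $0$ (this is the $q=0$ specialization of the renormalized Temperley--Lieb category in which the zig-zag equals $q\cdot\mathrm{id}_{[1]}$ and the circle equals $(q^2+1)\mathrm{id}_{[0]}$). A subset $I\subseteq\{1,\ldots,n\}$ is called apt if $n\notin I$ and $i\in I$ implies $i-1,i+1\notin I$. For an apt $I$, $\mathrm{cap}_{I,n}$ denotes the cap diagram from $[n]$ consisting of caps joining positions $(i,i+1)$ for $i\in I$ (and through-strands elsewhere), $\mathrm{cup}_{I,n}$ is the corresponding cup diagram obtained by reflecting it, and $c_{I,n}=\mathrm{cup}_{I,n}\circ\mathrm{cap}_{I,n}\in\mathrm{End}_{\mathcal{TL}_0(\Bbbk)}([n])$.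 The $n^\text{th}$ Jones--Wenzl projector is defined as $\mathrm{j}_n=\sum_{I\subseteq\{1,\ldots,n\}\text{ apt}}(-1)^{|I|}c_{I,n}$. *)

theory Defs
  imports Main
begin

text \<open>Morphisms of the free strict monoidal category on the generators cup : [0] -> [2]
  and cap : [2] -> [0] are represented by (well-typed) terms modulo the strict
  monoidal category axioms; the k-linear category is the k-span of such terms
  (finitely supported functions tm => k) modulo the linear monoidal ideal
  generated by the category axioms and the defining relations of TL_0.\<close>

datatype tm = Idt nat | Cup | Cap | Cmp tm tm | Tns tm tm
  \<comment> \<open>Cmp a b is the composite a \<circ> b (first b, then a); Tns a b is a \<otimes> b.\<close>

fun src :: "tm \<Rightarrow> nat" and tgt :: "tm \<Rightarrow> nat" where
  "src (Idt n) = n" | "tgt (Idt n) = n"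
| "src Cup = 0" | "tgt Cup = 2"
| "src Cap = 2" | "tgt Cap = 0"
| "src (Cmp a b) = src b" | "tgt (Cmp a b) = tgt a"
| "src (Tns a b) = src a + src b" | "tgt (Tns a b) = tgt a + tgt b"

fun wt :: "tm \<Rightarrow> bool" where
  "wt (Idt n) = True"
| "wt Cup = True"
| "wt Cap = True"
| "wt (Cmp a b) = (wt a \<and> wt b \<and> src a = tgt b)"
| "wt (Tns a b) = (wt a \<and> wt b)"

inductive ax_eq :: "tm \<Rightarrow> tm \<Rightarrow> bool" where
  cmp_assoc: "ax_eq (Cmp (Cmp a b) c) (Cmp a (Cmp b c))"
| cmp_idl: "ax_eq (Cmp (Idt (tgt a)) a) a"
| cmp_idr: "ax_eq (Cmp a (Idt (src a))) a"
| tns_assoc: "ax_eq (Tns (Tns a b) c) (Tns a (Tns b c))"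
| tns_unitl: "ax_eq (Tns (Idt 0) a) a"
| tns_unitr: "ax_eq (Tns a (Idt 0)) a"
| tns_id: "ax_eq (Tns (Idt m) (Idt n)) (Idt (m + n))"
| interchange: "ax_eq (Cmp (Tns a b) (Tns c d)) (Tns (Cmp a c) (Cmp b d))"

definition basis :: "tm \<Rightarrow> tm \<Rightarrow> 'k::field" where
  "basis t = (\<lambda>u. if u = t then 1 else 0)"

text \<open>Bilinear extension of composition and tensor product.\<close>
definition lcomp :: "(tm \<Rightarrow> 'k::field) \<Rightarrow> (tm \<Rightarrow> 'k) \<Rightarrow> tm \<Rightarrow> 'k" where
  "lcomp f g = (\<lambda>u. case u of Cmp a b \<Rightarrow> f a * g b | _ \<Rightarrow> 0)"

definition ltns :: "(tm \<Rightarrow> 'k::field) \<Rightarrow> (tm \<Rightarrow> 'k) \<Rightarrow> tm \<Rightarrow> 'k" where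
  "ltns f g = (\<lambda>u. case u of Tns a b \<Rightarrow> f a * g b | _ \<Rightarrow> 0)"

text \<open>The defining relations of TL_0: circle = id_[0], both zig-zags = 0.\<close>
definition circle :: tm where "circle = Cmp Cap Cup"
definition zigzag1 :: tm where "zigzag1 = Cmp (Tns (Idt 1) Cap) (Tns Cup (Idt 1))"
definition zigzag2 :: tm where "zigzag2 = Cmp (Tns Cap (Idt 1)) (Tns (Idt 1) Cup)"

text \<open>tl0_null m n r: r is a linear combination of terms [m] -> [n] lying in the
  linear monoidal ideal of relations, i.e. r = 0 in Hom_{TL_0(k)}([m],[n]).\<close>
inductive tl0_null :: "nat \<Rightarrow> nat \<Rightarrow> (tm \<Rightarrow> 'k::field) \<Rightarrow> bool" where
  zero: "tl0_null m n (\<lambda>_. 0)"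
| ax: "\<lbrakk>ax_eq x y; wt x; wt y; src x = m; tgt x = n; src y = m; tgt y = n\<rbrakk>
        \<Longrightarrow> tl0_null m n (\<lambda>u. basis x u - basis y u)"
| rel_circle: "tl0_null 0 0 (\<lambda>u. basis circle u - basis (Idt 0) u)"
| rel_zigzag1: "tl0_null 1 1 (basis zigzag1)"
| rel_zigzag2: "tl0_null 1 1 (basis zigzag2)"
| add: "\<lbrakk>tl0_null m n r; tl0_null m n s\<rbrakk> \<Longrightarrow> tl0_null m n (\<lambda>u. r u + s u)"
| smult: "tl0_null m n r \<Longrightarrow> tl0_null m n (\<lambda>u. c * r u)"
| comp_left: "\<lbrakk>tl0_null m n r; wt t; src t = n\<rbrakk> \<Longrightarrow> tl0_null m (tgt t) (lcomp (basis t) r)"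
| comp_right: "\<lbrakk>tl0_null m n r; wt t; tgt t = m\<rbrakk> \<Longrightarrow> tl0_null (src t) n (lcomp r (basis t))"
| tns_left: "\<lbrakk>tl0_null m n r; wt t\<rbrakk> \<Longrightarrow> tl0_null (src t + m) (tgt t + n) (ltns (basis t) r)"
| tns_right: "\<lbrakk>tl0_null m n r; wt t\<rbrakk> \<Longrightarrow> tl0_null (m + src t) (n + tgt t) (ltns r (basis t))"

definition tl0_eq :: "nat \<Rightarrow> nat \<Rightarrow> (tm \<Rightarrow> 'k::field) \<Rightarrow> (tm \<Rightarrow> 'k) \<Rightarrow> bool" where
  "tl0_eq m n f g \<longleftrightarrow> tl0_null m n (\<lambda>u. f u - g u)"

definition apt :: "nat \<Rightarrow> nat set \<Rightarrow> bool" where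
  "apt n I \<longleftrightarrow> I \<subseteq> {1..n} \<and> n \<notin> I \<and> (\<forall>i\<in>I. i - 1 \<notin> I \<and> i + 1 \<notin> I)"

text \<open>cap_{I,n} restricted to positions i..n (caps at (j,j+1) for j in I,
  through-strands elsewhere), and the reflected cup diagram.\<close>
function cap_from :: "nat set \<Rightarrow> nat \<Rightarrow> nat \<Rightarrow> tm" where
  "cap_from I n i = (if n < i then Idt 0
     else if i \<in> I then Tns Cap (cap_from I n (i + 2))
     else Tns (Idt 1) (cap_from I n (i + 1)))"
  by pat_completeness auto
termination by (relation "measure (\<lambda>(I, n, i). Suc n - i)") auto

function cup_from :: "nat set \<Rightarrow> nat \<Rightarrow> nat \<Rightarrow> tm" where
  "cup_from I n i = (if n < i then Idt 0
     else if i \<in> I then Tns Cup (cup_from I n (i + 2))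
     else Tns (Idt 1) (cup_from I n (i + 1)))"
  by pat_completeness auto
termination by (relation "measure (\<lambda>(I, n, i). Suc n - i)") auto

definition cap_I :: "nat set \<Rightarrow> nat \<Rightarrow> tm" where "cap_I I n = cap_from I n 1"
definition cup_I :: "nat set \<Rightarrow> nat \<Rightarrow> tm" where "cup_I I n = cup_from I n 1"
definition c_I :: "nat set \<Rightarrow> nat \<Rightarrow> tm" where "c_I I n = Cmp (cup_I I n) (cap_I I n)"

definition jw :: "nat \<Rightarrow> tm \<Rightarrow> 'k::field" where
  "jw n = (\<lambda>u. \<Sum>I\<in>{I. apt n I}. (-1) ^ card I * basis (c_I I n) u)"

end

theory Submission
  imports Defs
begin


declare cap_from.simps[simp del] cup_from.simps[simp del]

lemma cap_gt: "n < i \<Longrightarrow> cap_from I n i = Idt 0" by (simp add: cap_from.simps)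
lemma cap_in: "i \<le> n \<Longrightarrow> i \<in> I \<Longrightarrow> cap_from I n i = Tns Cap (cap_from I n (i+2))"
  by (subst cap_from.simps) simp
lemma cap_out: "i \<le> n \<Longrightarrow> i \<notin> I \<Longrightarrow> cap_from I n i = Tns (Idt 1) (cap_from I n (i+1))"
  by (subst cap_from.simps) simp
lemma cup_gt: "n < i \<Longrightarrow> cup_from I n i = Idt 0" by (simp add: cup_from.simps)
lemma cup_in: "i \<le> n \<Longrightarrow> i \<in> I \<Longrightarrow> cup_from I n i = Tns Cup (cup_from I n (i+2))"
  by (subst cup_from.simps) simp
lemma cup_out: "i \<le> n \<Longrightarrow> i \<notin> I \<Longrightarrow> cup_from I n i = Tns (Idt 1) (cup_from I n (i+1))"
  by (subst cup_from.simps) simp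

lemma wt_cap: "wt (cap_from I n i)"
  by (induction I n i rule: cap_from.induct) (subst cap_from.simps, auto)
lemma wt_cup: "wt (cup_from I n i)"
  by (induction I n i rule: cup_from.induct) (subst cup_from.simps, auto)
lemma cup_cap_types: "src (cup_from I n i) = tgt (cap_from I n i) \<and> tgt (cup_from I n i) = src (cap_from I n i)"
proof (induction I n i rule: cap_from.induct)
  case (1 I n i)
  then show ?case by (cases "n < i"; cases "i \<in> I") (auto simp: cap_gt cap_in cap_out cup_gt cup_in cup_out)
qed
lemma src_cap: "\<forall>j\<in>I. j < n \<Longrightarrow> src (cap_from I n i) = Suc n - i"
proof (induction I n i rule: cap_from.induct)
  case (1 I n i)
  show ?case
    apply (subst cap_from.simps)
    using 1 by auto
qed
lemma tgt_cup: "\<forall>j\<in>I. j < n \<Longrightarrow> tgt (cup_from I n i) = Suc n - i"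
  using src_cap cup_cap_types by metis
lemma src_cup: "src (cup_from I n i) = tgt (cap_from I n i)" using cup_cap_types by metis

lemma null_cong: "tl0_null m n r \<Longrightarrow> r = r' \<Longrightarrow> tl0_null m n r'" by simp

lemma lcomp_basis: "lcomp (basis a) (basis b) = (basis (Cmp a b) :: tm \<Rightarrow> 'k::field)"
  by (rule ext, simp add: lcomp_def basis_def split: tm.split)
lemma ltns_basis: "ltns (basis a) (basis b) = (basis (Tns a b) :: tm \<Rightarrow> 'k::field)"
  by (rule ext, simp add: ltns_def basis_def split: tm.split)
lemma lcomp_diff_r: "lcomp (basis t) (\<lambda>u. basis x u - basis y u) = (\<lambda>u. basis (Cmp t x) u - basis (Cmp t y) u :: 'k::field)"
  by (rule ext, simp add: lcomp_def basis_def split: tm.split)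
lemma lcomp_diff_l: "lcomp (\<lambda>u. basis x u - basis y u) (basis t) = (\<lambda>u. basis (Cmp x t) u - basis (Cmp y t) u :: 'k::field)"
  by (rule ext, simp add: lcomp_def basis_def split: tm.split)
lemma ltns_diff_r: "ltns (basis t) (\<lambda>u. basis x u - basis y u) = (\<lambda>u. basis (Tns t x) u - basis (Tns t y) u :: 'k::field)"
  by (rule ext, simp add: ltns_def basis_def split: tm.split)
lemma ltns_diff_l: "ltns (\<lambda>u. basis x u - basis y u) (basis t) = (\<lambda>u. basis (Tns x t) u - basis (Tns y t) u :: 'k::field)"
  by (rule ext, simp add: ltns_def basis_def split: tm.split)

context fixes kk :: "'k::field itself" begin

definition teq :: "tm \<Rightarrow> tm \<Rightarrow> bool" where
  "teq a b \<longleftrightarrow> wt a \<and> wt b \<and> src a = src b \<and> tgt a = tgt b \<and>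
     tl0_null (src a) (tgt a) (\<lambda>u. basis a u - basis b u :: 'k)"

definition tn :: "tm \<Rightarrow> bool" where
  "tn a \<longleftrightarrow> wt a \<and> tl0_null (src a) (tgt a) (basis a :: tm \<Rightarrow> 'k)"

lemma teq_refl: "wt a \<Longrightarrow> teq a a"
  unfolding teq_def by (simp add: tl0_null.zero)

lemma teq_sym: "teq a b \<Longrightarrow> teq b a"
  unfolding teq_def
  apply (elim conjE, intro conjI, simp_all)
  apply (drule tl0_null.smult[where c = "-1"])
  apply (erule null_cong) by (auto simp: algebra_simps)

lemma teq_trans[trans]: assumes "teq a b" "teq b c" shows "teq a c"
proof -
  from assms have w: "wt a" "wt c" "src a = src b" "tgt a = tgt b" "src b = src c" "tgt b = tgt c"
    and n1: "tl0_null (src a) (tgt a) (\<lambda>u. basis a u - basis b u :: 'k)"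
    and n2: "tl0_null (src b) (tgt b) (\<lambda>u. basis b u - basis c u :: 'k)"
    unfolding teq_def by auto
  have "tl0_null (src a) (tgt a) (\<lambda>u. (basis a u - basis b u) + (basis b u - basis c u) :: 'k)"
    using tl0_null.add[OF n1, of "\<lambda>u. basis b u - basis c u"] n2 w by simp
  then show ?thesis unfolding teq_def using w by simp
qed

lemma teq_wt: "teq a b \<Longrightarrow> wt a \<and> wt b \<and> src a = src b \<and> tgt a = tgt b"
  unfolding teq_def by auto

lemma teq_ax: "ax_eq x y \<Longrightarrow> wt x \<Longrightarrow> wt y \<Longrightarrow> src x = src y \<Longrightarrow> tgt x = tgt y \<Longrightarrow> teq x y"
proof -
  assume h: "ax_eq x y" "wt x" "wt y" "src x = src y" "tgt x = tgt y"
  have "tl0_null (src x) (tgt x) (\<lambda>u. basis x u - basis y u :: 'k)"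
    by (rule tl0_null.ax[OF h(1) h(2) h(3) refl refl]) (use h in auto)
  then show ?thesis unfolding teq_def using h by blast
qed

lemma teq_cmp: assumes "teq a a'" "teq b b'" "src a = tgt b" shows "teq (Cmp a b) (Cmp a' b')"
proof -
  from assms have w: "wt a" "wt a'" "wt b" "wt b'" "src a = src a'" "tgt a = tgt a'" "src b = src b'" "tgt b = tgt b'"
    and n1: "tl0_null (src a) (tgt a) (\<lambda>u. basis a u - basis a' u :: 'k)"
    and n2: "tl0_null (src b) (tgt b) (\<lambda>u. basis b u - basis b' u :: 'k)"
    unfolding teq_def by auto
  have A: "tl0_null (src b) (tgt a) (\<lambda>u. basis (Cmp a b) u - basis (Cmp a b') u :: 'k)"
    using tl0_null.comp_left[OF n2 w(1)] assms(3) by (simp add: lcomp_diff_r)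
  have B: "tl0_null (src b) (tgt a) (\<lambda>u. basis (Cmp a b') u - basis (Cmp a' b') u :: 'k)"
    using tl0_null.comp_right[OF n1 w(4)] assms(3) w by (simp add: lcomp_diff_l)
  have "tl0_null (src b) (tgt a) (\<lambda>u. (basis (Cmp a b) u - basis (Cmp a b') u) + (basis (Cmp a b') u - basis (Cmp a' b') u) :: 'k)"
    using tl0_null.add[OF A B] .
  then show ?thesis unfolding teq_def using w assms(3) by simp
qed

lemma teq_tns: assumes "teq a a'" "teq b b'" shows "teq (Tns a b) (Tns a' b')"
proof -
  from assms have w: "wt a" "wt a'" "wt b" "wt b'" "src a = src a'" "tgt a = tgt a'" "src b = src b'" "tgt b = tgt b'"
    and n1: "tl0_null (src a) (tgt a) (\<lambda>u. basis a u - basis a' u :: 'k)"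
    and n2: "tl0_null (src b) (tgt b) (\<lambda>u. basis b u - basis b' u :: 'k)"
    unfolding teq_def by auto
  have A: "tl0_null (src a + src b) (tgt a + tgt b) (\<lambda>u. basis (Tns a b) u - basis (Tns a b') u :: 'k)"
    using tl0_null.tns_left[OF n2 w(1)] by (simp add: ltns_diff_r)
  have B: "tl0_null (src a + src b) (tgt a + tgt b) (\<lambda>u. basis (Tns a b') u - basis (Tns a' b') u :: 'k)"
    using tl0_null.tns_right[OF n1 w(4)] w by (simp add: ltns_diff_l)
  have "tl0_null (src a + src b) (tgt a + tgt b) (\<lambda>u. (basis (Tns a b) u - basis (Tns a b') u) + (basis (Tns a b') u - basis (Tns a' b') u) :: 'k)"
    using tl0_null.add[OF A B] .
  then show ?thesis unfolding teq_def using w by simp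
qed

lemma tn_teq: assumes "teq a b" "tn b" shows "tn a"
proof -
  from assms have w: "wt a" "src a = src b" "tgt a = tgt b"
    and n1: "tl0_null (src a) (tgt a) (\<lambda>u. basis a u - basis b u :: 'k)"
    and n2: "tl0_null (src b) (tgt b) (basis b :: tm \<Rightarrow> 'k)"
    unfolding teq_def tn_def by auto
  have "tl0_null (src a) (tgt a) (\<lambda>u. (basis a u - basis b u) + basis b u :: 'k)"
    using tl0_null.add[OF n1, of "basis b"] n2 w by simp
  then show ?thesis unfolding tn_def using w by simp
qed

lemma tn_cmp_l: assumes "tn a" "wt b" "src a = tgt b" shows "tn (Cmp a b)"
proof -
  from assms(1) have w: "wt a" and r: "tl0_null (src a) (tgt a) (basis a :: tm \<Rightarrow> 'k)" unfolding tn_def by auto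
  have "tl0_null (src b) (tgt a) (lcomp (basis a) (basis b) :: tm \<Rightarrow> 'k)"
    by (rule tl0_null.comp_right[OF r assms(2)]) (use assms(3) in simp)
  then show ?thesis unfolding tn_def lcomp_basis using w assms by simp
qed
lemma tn_cmp_r: assumes "tn b" "wt a" "src a = tgt b" shows "tn (Cmp a b)"
proof -
  from assms(1) have w: "wt b" and r: "tl0_null (src b) (tgt b) (basis b :: tm \<Rightarrow> 'k)" unfolding tn_def by auto
  have "tl0_null (src b) (tgt a) (lcomp (basis a) (basis b) :: tm \<Rightarrow> 'k)"
    by (rule tl0_null.comp_left[OF r assms(2)]) (use assms(3) in simp)
  then show ?thesis unfolding tn_def lcomp_basis using w assms by simp
qed
lemma tn_tns_l: assumes "tn a" "wt b" shows "tn (Tns a b)"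
proof -
  from assms(1) have w: "wt a" and r: "tl0_null (src a) (tgt a) (basis a :: tm \<Rightarrow> 'k)" unfolding tn_def by auto
  have "tl0_null (src a + src b) (tgt a + tgt b) (ltns (basis a) (basis b) :: tm \<Rightarrow> 'k)"
    by (rule tl0_null.tns_right[OF r assms(2)])
  then show ?thesis unfolding tn_def ltns_basis using w assms by simp
qed
lemma tn_tns_r: assumes "tn b" "wt a" shows "tn (Tns a b)"
proof -
  from assms(1) have w: "wt b" and r: "tl0_null (src b) (tgt b) (basis b :: tm \<Rightarrow> 'k)" unfolding tn_def by auto
  have "tl0_null (src a + src b) (tgt a + tgt b) (ltns (basis a) (basis b) :: tm \<Rightarrow> 'k)"
    by (rule tl0_null.tns_left[OF r assms(2)])
  then show ?thesis unfolding tn_def ltns_basis using w assms by simp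
qed

lemma tn_zz1: "tn zigzag1"
  unfolding tn_def using tl0_null.rel_zigzag1 by (simp add: zigzag1_def)
lemma tn_zz2: "tn zigzag2"
  unfolding tn_def using tl0_null.rel_zigzag2 by (simp add: zigzag2_def)
lemma teq_circle: "teq (Cmp Cap Cup) (Idt 0)"
  unfolding teq_def using tl0_null.rel_circle by (simp add: circle_def)

lemma A_assoc: "wt a \<Longrightarrow> wt b \<Longrightarrow> wt c \<Longrightarrow> src a = tgt b \<Longrightarrow> src b = tgt c \<Longrightarrow>
  teq (Cmp (Cmp a b) c) (Cmp a (Cmp b c))"
  by (rule teq_ax) (auto intro: ax_eq.intros)
lemma A_idl: "wt a \<Longrightarrow> teq (Cmp (Idt (tgt a)) a) a"
  by (rule teq_ax) (auto intro: ax_eq.intros)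
lemma A_idr: "wt a \<Longrightarrow> teq (Cmp a (Idt (src a))) a"
  by (rule teq_ax) (auto intro: ax_eq.intros)
lemma A_tassoc: "wt a \<Longrightarrow> wt b \<Longrightarrow> wt c \<Longrightarrow> teq (Tns (Tns a b) c) (Tns a (Tns b c))"
  by (rule teq_ax) (auto intro: ax_eq.intros)
lemma A_unitl: "wt a \<Longrightarrow> teq (Tns (Idt 0) a) a"
  by (rule teq_ax) (auto intro: ax_eq.intros)
lemma A_unitr: "wt a \<Longrightarrow> teq (Tns a (Idt 0)) a"
  by (rule teq_ax) (auto intro: ax_eq.intros)
lemma A_tid: "teq (Tns (Idt m) (Idt n)) (Idt (m + n))"
  by (rule teq_ax) (auto intro: ax_eq.intros)
lemma A_ich: "wt a \<Longrightarrow> wt b \<Longrightarrow> wt c \<Longrightarrow> wt d \<Longrightarrow> src a = tgt c \<Longrightarrow> src b = tgt d \<Longrightarrow>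
  teq (Cmp (Tns a b) (Tns c d)) (Tns (Cmp a c) (Cmp b d))"
  by (rule teq_ax) (auto intro: ax_eq.intros)




lemma regroup: "wt a \<Longrightarrow> wt b \<Longrightarrow> wt c \<Longrightarrow> wt d \<Longrightarrow> src a = tgt b \<Longrightarrow> src b = tgt c \<Longrightarrow> src c = tgt d \<Longrightarrow>
  teq (Cmp (Cmp a b) (Cmp c d)) (Cmp a (Cmp (Cmp b c) d))"
proof -
  assume w: "wt a" "wt b" "wt c" "wt d" "src a = tgt b" "src b = tgt c" "src c = tgt d"
  have "teq (Cmp (Cmp a b) (Cmp c d)) (Cmp a (Cmp b (Cmp c d)))" by (rule A_assoc) (use w in simp_all)
  also have "teq \<dots> (Cmp a (Cmp (Cmp b c) d))"
    by (rule teq_cmp[OF teq_refl teq_sym[OF A_assoc]]) (use w in simp_all)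
  finally show ?thesis .
qed

lemma tn_regroup: "tn (Cmp b c) \<Longrightarrow> wt a \<Longrightarrow> wt d \<Longrightarrow> src a = tgt b \<Longrightarrow> src c = tgt d \<Longrightarrow>
  tn (Cmp (Cmp a b) (Cmp c d))"
  apply (frule tn_def[THEN iffD1])
  apply (rule tn_teq[OF regroup])
  apply (simp_all)
  apply (rule tn_cmp_r[OF tn_cmp_l]) by simp_all

lemma ich_rev: "wt a \<Longrightarrow> wt b \<Longrightarrow> wt c \<Longrightarrow> wt d \<Longrightarrow> src a = tgt c \<Longrightarrow> src b = tgt d \<Longrightarrow>
  teq (Tns (Cmp a c) (Cmp b d)) (Cmp (Tns a b) (Tns c d))"
  by (rule teq_sym, rule A_ich)

lemma G4: assumes "wt a1" "wt a2" "wt a3" "wt a4" "wt b1" "wt b2" "wt b3" "wt b4"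
  "src a1 = tgt a2" "src b1 = tgt b2" "src a2 = tgt a3" "src b2 = tgt b3" "src a3 = tgt a4" "src b3 = tgt b4"
  shows "teq (Cmp (Cmp (Tns a1 b1) (Tns a2 b2)) (Cmp (Tns a3 b3) (Tns a4 b4)))
              (Tns (Cmp (Cmp a1 a2) (Cmp a3 a4)) (Cmp (Cmp b1 b2) (Cmp b3 b4)))"
proof -
  have "teq (Cmp (Cmp (Tns a1 b1) (Tns a2 b2)) (Cmp (Tns a3 b3) (Tns a4 b4)))
              (Cmp (Tns (Cmp a1 a2) (Cmp b1 b2)) (Tns (Cmp a3 a4) (Cmp b3 b4)))"
    by (rule teq_cmp[OF A_ich A_ich]) (use assms in simp_all)
  also have "teq \<dots> (Tns (Cmp (Cmp a1 a2) (Cmp a3 a4)) (Cmp (Cmp b1 b2) (Cmp b3 b4)))"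
    by (rule A_ich) (use assms in simp_all)
  finally show ?thesis .
qed

lemma Z2: assumes wA: "wt A" and wB: "wt B" and s: "src A = Suc (tgt B)"
  shows "tn (Cmp (Tns Cap A) (Tns (Idt 1) (Tns Cup B)))"
proof -
  define t where "t = tgt B"
  let ?U1 = "Tns (Idt 0) A" let ?V1 = "Tns Cap (Idt (src A))"
  let ?V2 = "Tns (Idt 1) (Tns Cup (Idt t))" let ?U2 = "Tns (Idt 1) (Tns (Idt 0) B)"
  have e1: "teq (Tns Cap A) (Cmp ?U1 ?V1)"
  proof (rule teq_sym)
    have "teq (Cmp ?U1 ?V1) (Tns (Cmp (Idt 0) Cap) (Cmp A (Idt (src A))))" by (rule A_ich) (simp_all add: wA)
    also have "teq \<dots> (Tns Cap A)" by (rule teq_tns) (use A_idl[of Cap] A_idr[OF wA] in simp_all)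
    finally show "teq (Cmp ?U1 ?V1) (Tns Cap A)" .
  qed
  have e2: "teq (Tns (Idt 1) (Tns Cup B)) (Cmp ?V2 ?U2)"
  proof (rule teq_sym)
    have "teq (Cmp ?V2 ?U2) (Tns (Cmp (Idt 1) (Idt 1)) (Cmp (Tns Cup (Idt t)) (Tns (Idt 0) B)))"
      by (rule A_ich) (simp_all add: wB t_def)
    also have "teq \<dots> (Tns (Idt 1) (Tns Cup B))"
    proof (rule teq_tns)
      show "teq (Cmp (Idt 1) (Idt 1)) (Idt 1)" using A_idl[of "Idt 1"] by simp
      have "teq (Cmp (Tns Cup (Idt t)) (Tns (Idt 0) B)) (Tns (Cmp Cup (Idt 0)) (Cmp (Idt t) B))"
        by (rule A_ich) (simp_all add: wB t_def)
      also have "teq \<dots> (Tns Cup B)"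
        by (rule teq_tns) (use A_idr[of Cup] A_idl[OF wB] in \<open>simp_all add: t_def\<close>)
      finally show "teq (Cmp (Tns Cup (Idt t)) (Tns (Idt 0) B)) (Tns Cup B)" .
    qed
    finally show "teq (Cmp ?V2 ?U2) (Tns (Idt 1) (Tns Cup B))" .
  qed
  have zz: "tn (Cmp ?V1 ?V2)"
  proof -
    have v1: "teq ?V1 (Tns (Tns Cap (Idt 1)) (Idt t))"
    proof -
      have "teq ?V1 (Tns Cap (Tns (Idt 1) (Idt t)))"
      proof -
        have eq: "src A = 1 + t" using s t_def by simp
        show ?thesis unfolding eq by (rule teq_tns[OF teq_refl teq_sym[OF A_tid]]) simp
      qed
      also have "teq \<dots> (Tns (Tns Cap (Idt 1)) (Idt t))" by (rule teq_sym, rule A_tassoc) simp_all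
      finally show ?thesis .
    qed
    have v2: "teq ?V2 (Tns (Tns (Idt 1) Cup) (Idt t))" by (rule teq_sym, rule A_tassoc) simp_all
    have "teq (Cmp ?V1 ?V2) (Cmp (Tns (Tns Cap (Idt 1)) (Idt t)) (Tns (Tns (Idt 1) Cup) (Idt t)))"
      by (rule teq_cmp[OF v1 v2]) (simp add: s t_def)
    also have "teq \<dots> (Tns zigzag2 (Cmp (Idt t) (Idt t)))"
      unfolding zigzag2_def by (rule A_ich) simp_all
    finally have "teq (Cmp ?V1 ?V2) (Tns zigzag2 (Cmp (Idt t) (Idt t)))" .
    moreover have "tn (Tns zigzag2 (Cmp (Idt t) (Idt t)))" by (rule tn_tns_l[OF tn_zz2]) simp
    ultimately show ?thesis by (rule tn_teq)
  qed
  have "teq (Cmp (Tns Cap A) (Tns (Idt 1) (Tns Cup B))) (Cmp (Cmp ?U1 ?V1) (Cmp ?V2 ?U2))"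
    by (rule teq_cmp[OF e1 e2]) (simp add: s)
  moreover have "tn (Cmp (Cmp ?U1 ?V1) (Cmp ?V2 ?U2))"
    by (rule tn_regroup[OF zz]) (simp_all add: wA wB s t_def)
  ultimately show ?thesis by (rule tn_teq)
qed


lemma Z1: assumes wA: "wt A" and wB: "wt B" and s: "tgt B = Suc (src A)"
  shows "tn (Cmp (Tns (Idt 1) (Tns Cap A)) (Tns Cup B))"
proof -
  define t where "t = tgt B"
  define r where "r = src A"
  let ?U1 = "Tns (Idt 1) (Tns (Idt 0) A)" let ?V1 = "Tns (Idt 1) (Tns Cap (Idt r))"
  let ?V2 = "Tns Cup (Idt t)" let ?U2 = "Tns (Idt 0) B"
  have e1: "teq (Tns (Idt 1) (Tns Cap A)) (Cmp ?U1 ?V1)"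
  proof (rule teq_sym)
    have "teq (Cmp ?U1 ?V1) (Tns (Cmp (Idt 1) (Idt 1)) (Cmp (Tns (Idt 0) A) (Tns Cap (Idt r))))"
      by (rule A_ich) (simp_all add: wA r_def)
    also have "teq \<dots> (Tns (Idt 1) (Tns Cap A))"
    proof (rule teq_tns)
      show "teq (Cmp (Idt 1) (Idt 1)) (Idt 1)" using A_idl[of "Idt 1"] by simp
      have "teq (Cmp (Tns (Idt 0) A) (Tns Cap (Idt r))) (Tns (Cmp (Idt 0) Cap) (Cmp A (Idt r)))"
        by (rule A_ich) (simp_all add: wA r_def)
      also have "teq \<dots> (Tns Cap A)"
        by (rule teq_tns) (use A_idl[of Cap] A_idr[OF wA] in \<open>simp_all add: r_def\<close>)
      finally show "teq (Cmp (Tns (Idt 0) A) (Tns Cap (Idt r))) (Tns Cap A)" .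
    qed
    finally show "teq (Cmp ?U1 ?V1) (Tns (Idt 1) (Tns Cap A))" .
  qed
  have e2: "teq (Tns Cup B) (Cmp ?V2 ?U2)"
  proof (rule teq_sym)
    have "teq (Cmp ?V2 ?U2) (Tns (Cmp Cup (Idt 0)) (Cmp (Idt t) B))"
      by (rule A_ich) (simp_all add: wB t_def)
    also have "teq \<dots> (Tns Cup B)"
      by (rule teq_tns) (use A_idr[of Cup] A_idl[OF wB] in \<open>simp_all add: t_def\<close>)
    finally show "teq (Cmp ?V2 ?U2) (Tns Cup B)" .
  qed
  have zz: "tn (Cmp ?V1 ?V2)"
  proof -
    have v2: "teq ?V2 (Tns (Tns Cup (Idt 1)) (Idt r))"
    proof -
      have "teq ?V2 (Tns Cup (Tns (Idt 1) (Idt r)))"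
      proof -
        have eq: "t = 1 + r" using s t_def r_def by simp
        show ?thesis unfolding eq by (rule teq_tns[OF teq_refl teq_sym[OF A_tid]]) simp
      qed
      also have "teq \<dots> (Tns (Tns Cup (Idt 1)) (Idt r))" by (rule teq_sym, rule A_tassoc) simp_all
      finally show ?thesis .
    qed
    have v1: "teq ?V1 (Tns (Tns (Idt 1) Cap) (Idt r))" by (rule teq_sym, rule A_tassoc) simp_all
    have "teq (Cmp ?V1 ?V2) (Cmp (Tns (Tns (Idt 1) Cap) (Idt r)) (Tns (Tns Cup (Idt 1)) (Idt r)))"
      by (rule teq_cmp[OF v1 v2]) (simp add: s t_def r_def)
    also have "teq \<dots> (Tns zigzag1 (Cmp (Idt r) (Idt r)))"
      unfolding zigzag1_def by (rule A_ich) simp_all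
    finally have "teq (Cmp ?V1 ?V2) (Tns zigzag1 (Cmp (Idt r) (Idt r)))" .
    moreover have "tn (Tns zigzag1 (Cmp (Idt r) (Idt r)))" by (rule tn_tns_l[OF tn_zz1]) simp
    ultimately show ?thesis by (rule tn_teq)
  qed
  have "teq (Cmp (Tns (Idt 1) (Tns Cap A)) (Tns Cup B)) (Cmp (Cmp ?U1 ?V1) (Cmp ?V2 ?U2))"
    by (rule teq_cmp[OF e1 e2]) (simp add: s)
  moreover have "tn (Cmp (Cmp ?U1 ?V1) (Cmp ?V2 ?U2))"
    by (rule tn_regroup[OF zz]) (simp_all add: wA wB s t_def r_def)
  ultimately show ?thesis by (rule tn_teq)
qed


lemma I11: "teq (Cmp (Idt 1) (Idt 1)) (Idt 1)" using A_idl[of "Idt 1"] by simp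
lemma I22: "teq (Cmp (Idt 2) (Idt 2)) (Idt 2)" using A_idl[of "Idt 2"] by simp
lemma I00: "teq (Cmp (Idt 0) (Idt 0)) (Idt 0)" using A_idl[of "Idt 0"] by simp
lemma Tid11: "teq (Tns (Idt 1) (Idt 1)) (Idt 2)" using A_tid[of 1 1] unfolding one_add_one .

lemma B1: "teq (Cmp (Cmp (Idt 1) (Idt 1)) (Cmp (Idt 1) (Idt 1))) (Cmp (Idt 1) (Idt 1))"
  by (rule teq_cmp[OF I11 I11]) simp

lemma B2: "teq (Cmp (Cmp Cup Cap) (Cmp Cup Cap)) (Cmp Cup Cap)"
proof -
  have "teq (Cmp (Cmp Cup Cap) (Cmp Cup Cap)) (Cmp Cup (Cmp (Cmp Cap Cup) Cap))"
    by (rule regroup) simp_all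
  also have "teq \<dots> (Cmp Cup (Cmp (Idt 0) Cap))"
    by (rule teq_cmp[OF teq_refl teq_cmp[OF teq_circle teq_refl]]) simp_all
  also have "teq \<dots> (Cmp Cup Cap)"
    by (rule teq_cmp[OF teq_refl A_idl[of Cap, simplified]]) simp_all
  finally show ?thesis .
qed

lemma B3: "teq (Cmp (Cmp Cup Cap) (Cmp (Idt 2) (Idt 2))) (Cmp Cup Cap)"
proof -
  have "teq (Cmp (Cmp Cup Cap) (Cmp (Idt 2) (Idt 2))) (Cmp (Cmp Cup Cap) (Idt 2))"
    by (rule teq_cmp[OF teq_refl I22]) simp_all
  also have "teq \<dots> (Cmp Cup Cap)"
    using A_idr[of "Cmp Cup Cap"] by simp
  finally show ?thesis .
qed

lemma B4: "teq (Cmp (Cmp (Idt 2) (Idt 2)) (Cmp Cup Cap)) (Cmp Cup Cap)"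
proof -
  have "teq (Cmp (Cmp (Idt 2) (Idt 2)) (Cmp Cup Cap)) (Cmp (Idt 2) (Cmp Cup Cap))"
    by (rule teq_cmp[OF I22 teq_refl]) simp_all
  also have "teq \<dots> (Cmp Cup Cap)"
    using A_idl[of "Cmp Cup Cap"] by simp
  finally show ?thesis .
qed

lemma T2: "wt T \<Longrightarrow> teq (Tns (Idt 1) (Tns (Idt 1) T)) (Tns (Idt 2) T)"
proof -
  assume w: "wt T"
  have "teq (Tns (Idt 1) (Tns (Idt 1) T)) (Tns (Tns (Idt 1) (Idt 1)) T)"
    by (rule teq_sym, rule A_tassoc) (simp_all add: w)
  also have "teq \<dots> (Tns (Idt 2) T)"
    by (rule teq_tns[OF Tid11 teq_refl[OF w]])
  finally show ?thesis .
qed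

lemma finish: "teq P (Cmp p1 p2) \<Longrightarrow> teq Q (Cmp q1 q2) \<Longrightarrow> wt p1 \<Longrightarrow> wt p2 \<Longrightarrow> wt q1 \<Longrightarrow> wt q2 \<Longrightarrow>
  src p1 = tgt p2 \<Longrightarrow> src q1 = tgt q2 \<Longrightarrow> teq (Tns P Q) (Cmp (Tns p1 q1) (Tns p2 q2))"
  by (rule teq_trans[OF teq_tns ich_rev])

definition noconf :: "nat set \<Rightarrow> nat set \<Rightarrow> nat \<Rightarrow> bool" where
  "noconf I J i \<longleftrightarrow> (\<forall>j\<ge>i. (j \<in> I \<longrightarrow> Suc j \<notin> J) \<and> (j \<in> J \<longrightarrow> Suc j \<notin> I))"

lemma noconf_step: "noconf I J i = (((i \<in> I \<longrightarrow> Suc i \<notin> J) \<and> (i \<in> J \<longrightarrow> Suc i \<notin> I)) \<and> noconf I J (i + 1))"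
proof
  assume "noconf I J i" then show "((i \<in> I \<longrightarrow> Suc i \<notin> J) \<and> (i \<in> J \<longrightarrow> Suc i \<notin> I)) \<and> noconf I J (i + 1)"
    unfolding noconf_def by auto
next
  assume h: "((i \<in> I \<longrightarrow> Suc i \<notin> J) \<and> (i \<in> J \<longrightarrow> Suc i \<notin> I)) \<and> noconf I J (i + 1)"
  show "noconf I J i" unfolding noconf_def
  proof (intro allI impI)
    fix j assume "i \<le> j"
    then consider "j = i" | "i + 1 \<le> j" by linarith
    then show "(j \<in> I \<longrightarrow> Suc j \<notin> J) \<and> (j \<in> J \<longrightarrow> Suc j \<notin> I)"
      by cases (use h in \<open>auto simp: noconf_def\<close>)
  qed
qed

definition F4 :: "nat set \<Rightarrow> nat set \<Rightarrow> nat \<Rightarrow> nat \<Rightarrow> tm" where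
  "F4 I J n i = Cmp (Cmp (cup_from I n i) (cap_from I n i)) (Cmp (cup_from J n i) (cap_from J n i))"


lemma main_step:
  assumes gI: "\<forall>j\<in>I. j < n \<and> Suc j \<notin> I" and gJ: "\<forall>j\<in>J. j < n \<and> Suc j \<notin> J"
  shows "(noconf I J i \<longrightarrow> teq (F4 I J n i) (Cmp (cup_from (I \<union> J) n i) (cap_from (I \<union> J) n i))) \<and>
         (\<not> noconf I J i \<longrightarrow> tn (F4 I J n i))"
proof (induction "Suc n - i" arbitrary: i rule: less_induct)
  case less
  have lI: "\<forall>j\<in>I. j<n" and lJ: "\<forall>j\<in>J. j<n" and lK: "\<forall>j\<in>I \<union> J. j<n" using gI gJ by auto
  note ty = src_cap[OF lI] src_cap[OF lJ] src_cap[OF lK] tgt_cup[OF lI] tgt_cup[OF lJ] tgt_cup[OF lK]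
    src_cup wt_cap wt_cup
  show ?case
  proof (cases "n < i")
    case True
    have nc: "noconf I J i" using True lI lJ unfolding noconf_def by auto
    have "teq (F4 I J n i) (Cmp (Idt 0) (Idt 0))"
      unfolding F4_def cap_gt[OF True] cup_gt[OF True]
      by (rule teq_cmp[OF I00 I00]) simp
    then show ?thesis using nc by (simp add: cap_gt[OF True] cup_gt[OF True])
  next
    case False
    hence le: "i \<le> n" by simp
    consider (a) "i\<notin>I" "i\<notin>J" | (b) "i\<in>I" "i\<in>J" | (c) "i\<in>I" "i\<notin>J" "Suc i\<notin>J"
      | (d) "i\<in>I" "i\<notin>J" "Suc i\<in>J" | (e) "i\<notin>I" "i\<in>J" "Suc i\<notin>I" | (f) "i\<notin>I" "i\<in>J" "Suc i\<in>I"
      by blast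
    then show ?thesis
    proof cases
      case a
      have IH: "(noconf I J (i+1) \<longrightarrow> teq (F4 I J n (i+1)) (Cmp (cup_from (I \<union> J) n (i+1)) (cap_from (I \<union> J) n (i+1)))) \<and>
         (\<not> noconf I J (i+1) \<longrightarrow> tn (F4 I J n (i+1)))"
        by (rule less) (use le in simp)
      have nc: "noconf I J i = noconf I J (i+1)" using a noconf_step[of I J i] by simp
      have g: "teq (F4 I J n i) (Tns (Cmp (Cmp (Idt 1) (Idt 1)) (Cmp (Idt 1) (Idt 1))) (F4 I J n (i+1)))"
        unfolding F4_def cap_out[OF le a(1)] cup_out[OF le a(1)] cap_out[OF le a(2)] cup_out[OF le a(2)]
        by (rule G4) (simp_all add: ty)
      have tK: "Cmp (cup_from (I \<union> J) n i) (cap_from (I \<union> J) n i) =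
        Cmp (Tns (Idt 1) (cup_from (I \<union> J) n (i+1))) (Tns (Idt 1) (cap_from (I \<union> J) n (i+1)))"
        using a le by (simp add: cap_out cup_out)
      show ?thesis
      proof (cases "noconf I J (i+1)")
        case True
        have "teq (F4 I J n i) (Cmp (Tns (Idt 1) (cup_from (I \<union> J) n (i+1))) (Tns (Idt 1) (cap_from (I \<union> J) n (i+1))))"
          by (rule teq_trans[OF g finish[OF B1]]) (use IH True in \<open>simp_all add: ty\<close>)
        then show ?thesis using nc True tK by simp
      next
        case False
        have "tn (F4 I J n i)"
          by (rule tn_teq[OF g tn_tns_r]) (use IH False in simp_all)
        then show ?thesis using nc False by simp
      qed
    next
      case b
      have lt: "i < n" using b lI by auto
      have IH: "(noconf I J (i+2) \<longrightarrow> teq (F4 I J n (i+2)) (Cmp (cup_from (I \<union> J) n (i+2)) (cap_from (I \<union> J) n (i+2)))) \<and>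
         (\<not> noconf I J (i+2) \<longrightarrow> tn (F4 I J n (i+2)))"
        by (rule less) (use lt in simp)
      have nc: "noconf I J i = noconf I J (i+2)"
        using b gI gJ noconf_step[of I J i] noconf_step[of I J "i+1"] by auto
      have g: "teq (F4 I J n i) (Tns (Cmp (Cmp Cup Cap) (Cmp Cup Cap)) (F4 I J n (i+2)))"
        unfolding F4_def cap_in[OF le b(1)] cup_in[OF le b(1)] cap_in[OF le b(2)] cup_in[OF le b(2)]
        by (rule G4) (simp_all add: ty)
      have tK: "Cmp (cup_from (I \<union> J) n i) (cap_from (I \<union> J) n i) =
        Cmp (Tns Cup (cup_from (I \<union> J) n (i+2))) (Tns Cap (cap_from (I \<union> J) n (i+2)))"
        using b le by (simp add: cap_in cup_in)
      show ?thesis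
      proof (cases "noconf I J (i+2)")
        case True
        have "teq (F4 I J n i) (Cmp (Tns Cup (cup_from (I \<union> J) n (i+2))) (Tns Cap (cap_from (I \<union> J) n (i+2))))"
          by (rule teq_trans[OF g finish[OF B2]]) (use IH True in \<open>simp_all add: ty\<close>)
        then show ?thesis using nc True tK by simp
      next
        case False
        have "tn (F4 I J n i)"
          by (rule tn_teq[OF g tn_tns_r]) (use IH False in simp_all)
        then show ?thesis using nc False by simp
      qed
    next
      case c
      have lt: "i < n" using c lI by auto
      hence le1: "i + 1 \<le> n" by simp
      have n1: "i + 1 \<notin> J" using c by simp
      have IH: "(noconf I J (i+2) \<longrightarrow> teq (F4 I J n (i+2)) (Cmp (cup_from (I \<union> J) n (i+2)) (cap_from (I \<union> J) n (i+2)))) \<and>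
         (\<not> noconf I J (i+2) \<longrightarrow> tn (F4 I J n (i+2)))"
        by (rule less) (use lt in simp)
      have nc: "noconf I J i = noconf I J (i+2)"
        using c gI gJ noconf_step[of I J i] noconf_step[of I J "i+1"] by auto
      have j2: "teq (Cmp (cup_from J n i) (cap_from J n i)) (Cmp (Tns (Idt 2) (cup_from J n (i+2))) (Tns (Idt 2) (cap_from J n (i+2))))"
        unfolding cap_out[OF le c(2)] cup_out[OF le c(2)] cap_out[OF le1 n1] cup_out[OF le1 n1] add.assoc one_add_one
        by (rule teq_cmp[OF T2 T2]) (simp_all add: ty)
      have g0: "teq (F4 I J n i) (Cmp (Cmp (Tns Cup (cup_from I n (i+2))) (Tns Cap (cap_from I n (i+2))))
                   (Cmp (Tns (Idt 2) (cup_from J n (i+2))) (Tns (Idt 2) (cap_from J n (i+2)))))"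
        unfolding F4_def cap_in[OF le c(1)] cup_in[OF le c(1)]
        by (rule teq_cmp[OF teq_refl j2]) (use lt in \<open>simp_all add: ty\<close>)
      have g: "teq (F4 I J n i) (Tns (Cmp (Cmp Cup Cap) (Cmp (Idt 2) (Idt 2))) (F4 I J n (i+2)))"
        unfolding F4_def
        by (rule teq_trans[OF g0[unfolded F4_def]], rule G4) (use lt in \<open>simp_all add: ty\<close>)
      have tK: "Cmp (cup_from (I \<union> J) n i) (cap_from (I \<union> J) n i) =
        Cmp (Tns Cup (cup_from (I \<union> J) n (i+2))) (Tns Cap (cap_from (I \<union> J) n (i+2)))"
        using c le by (simp add: cap_in cup_in)
      show ?thesis
      proof (cases "noconf I J (i+2)")
        case True
        have "teq (F4 I J n i) (Cmp (Tns Cup (cup_from (I \<union> J) n (i+2))) (Tns Cap (cap_from (I \<union> J) n (i+2))))"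
          by (rule teq_trans[OF g finish[OF B3]]) (use IH True in \<open>simp_all add: ty\<close>)
        then show ?thesis using nc True tK by simp
      next
        case False
        have "tn (F4 I J n i)"
          by (rule tn_teq[OF g tn_tns_r]) (use IH False in simp_all)
        then show ?thesis using nc False by simp
      qed
    next
      case e
      have lt: "i < n" using e lJ by auto
      hence le1: "i + 1 \<le> n" by simp
      have n1: "i + 1 \<notin> I" using e by simp
      have IH: "(noconf I J (i+2) \<longrightarrow> teq (F4 I J n (i+2)) (Cmp (cup_from (I \<union> J) n (i+2)) (cap_from (I \<union> J) n (i+2)))) \<and>
         (\<not> noconf I J (i+2) \<longrightarrow> tn (F4 I J n (i+2)))"
        by (rule less) (use lt in simp)
      have nc: "noconf I J i = noconf I J (i+2)"
        using e gI gJ noconf_step[of I J i] noconf_step[of I J "i+1"] by auto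
      have j2: "teq (Cmp (cup_from I n i) (cap_from I n i)) (Cmp (Tns (Idt 2) (cup_from I n (i+2))) (Tns (Idt 2) (cap_from I n (i+2))))"
        unfolding cap_out[OF le e(1)] cup_out[OF le e(1)] cap_out[OF le1 n1] cup_out[OF le1 n1] add.assoc one_add_one
        by (rule teq_cmp[OF T2 T2]) (simp_all add: ty)
      have g0: "teq (F4 I J n i) (Cmp (Cmp (Tns (Idt 2) (cup_from I n (i+2))) (Tns (Idt 2) (cap_from I n (i+2))))
                   (Cmp (Tns Cup (cup_from J n (i+2))) (Tns Cap (cap_from J n (i+2)))))"
        unfolding F4_def cap_in[OF le e(2)] cup_in[OF le e(2)]
        by (rule teq_cmp[OF j2 teq_refl]) (use lt in \<open>simp_all add: ty\<close>)
      have g: "teq (F4 I J n i) (Tns (Cmp (Cmp (Idt 2) (Idt 2)) (Cmp Cup Cap)) (F4 I J n (i+2)))"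
        unfolding F4_def
        by (rule teq_trans[OF g0[unfolded F4_def]], rule G4) (use lt in \<open>simp_all add: ty\<close>)
      have tK: "Cmp (cup_from (I \<union> J) n i) (cap_from (I \<union> J) n i) =
        Cmp (Tns Cup (cup_from (I \<union> J) n (i+2))) (Tns Cap (cap_from (I \<union> J) n (i+2)))"
        using e le by (simp add: cap_in cup_in)
      show ?thesis
      proof (cases "noconf I J (i+2)")
        case True
        have "teq (F4 I J n i) (Cmp (Tns Cup (cup_from (I \<union> J) n (i+2))) (Tns Cap (cap_from (I \<union> J) n (i+2))))"
          by (rule teq_trans[OF g finish[OF B4]]) (use IH True in \<open>simp_all add: ty\<close>)
        then show ?thesis using nc True tK by simp
      next
        case False
        have "tn (F4 I J n i)"
          by (rule tn_teq[OF g tn_tns_r]) (use IH False in simp_all)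
        then show ?thesis using nc False by simp
      qed
    next
      case d
      have lt: "i + 1 < n" using d lJ by auto
      hence le1: "i + 1 \<le> n" by simp
      have nc: "\<not> noconf I J i" using d unfolding noconf_def by auto
      have z: "tn (Cmp (cap_from I n i) (cup_from J n i))"
        unfolding cap_in[OF le d(1)] cup_out[OF le d(2)] cup_in[OF le1 d(3)[unfolded Suc_eq_plus1]]
        by (rule Z2) (use lt in \<open>simp_all add: ty\<close>)
      have "tn (F4 I J n i)" unfolding F4_def
        by (rule tn_regroup[OF z]) (simp_all add: ty)
      then show ?thesis using nc by simp
    next
      case f
      have lt: "i + 1 < n" using f lI by auto
      hence le1: "i + 1 \<le> n" by simp
      have nc: "\<not> noconf I J i" using f unfolding noconf_def by auto
      have z: "tn (Cmp (cap_from I n i) (cup_from J n i))"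
        unfolding cap_out[OF le f(1)] cap_in[OF le1 f(3)[unfolded Suc_eq_plus1]] cup_in[OF le f(2)]
        by (rule Z1) (use lt in \<open>simp_all add: ty\<close>)
      have "tn (F4 I J n i)" unfolding F4_def
        by (rule tn_regroup[OF z]) (simp_all add: ty)
      then show ?thesis using nc by simp
    qed
  qed
qed


lemma apt_good: assumes "apt n I" shows "\<forall>j\<in>I. j < n \<and> Suc j \<notin> I"
proof
  fix j assume j: "j \<in> I"
  have "j \<le> n" "j \<noteq> n" "j + 1 \<notin> I" using assms j unfolding apt_def by auto
  then show "j < n \<and> Suc j \<notin> I" by simp
qed

lemma apt_noconf: assumes "apt n I" "apt n J" shows "apt n (I \<union> J) \<longleftrightarrow> noconf I J 1"
proof
  assume h: "apt n (I \<union> J)"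
  show "noconf I J 1" unfolding noconf_def
  proof (intro allI impI)
    fix j :: nat assume "1 \<le> j"
    show "(j \<in> I \<longrightarrow> Suc j \<notin> J) \<and> (j \<in> J \<longrightarrow> Suc j \<notin> I)"
      using h unfolding apt_def by auto
  qed
next
  assume h: "noconf I J 1"
  have sI: "I \<subseteq> {1..n}" "n \<notin> I" "\<forall>i\<in>I. i - 1 \<notin> I \<and> i + 1 \<notin> I" using assms(1) unfolding apt_def by auto
  have sJ: "J \<subseteq> {1..n}" "n \<notin> J" "\<forall>i\<in>J. i - 1 \<notin> J \<and> i + 1 \<notin> J" using assms(2) unfolding apt_def by auto
  have h': "\<And>j. j \<in> I \<union> J \<Longrightarrow> Suc j \<notin> I \<union> J"
  proof -
    fix j assume j: "j \<in> I \<union> J"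
    then have "1 \<le> j" using sI sJ by auto
    then show "Suc j \<notin> I \<union> J" using h j sI sJ unfolding noconf_def by auto
  qed
  show "apt n (I \<union> J)" unfolding apt_def
  proof (intro conjI ballI)
    show "I \<union> J \<subseteq> {1..n}" using sI sJ by auto
    show "n \<notin> I \<union> J" using sI sJ by auto
  next
    fix i assume i: "i \<in> I \<union> J"
    show "i + 1 \<notin> I \<union> J" using h'[OF i] by simp
    show "i - 1 \<notin> I \<union> J"
    proof
      assume i1: "i - 1 \<in> I \<union> J"
      have "1 \<le> i" using i sI sJ by auto
      then have "Suc (i - 1) = i" by simp
      then show False using h'[OF i1] i by simp
    qed
  qed
qed

lemma pair: assumes aI: "apt n I" and aJ: "apt n J"
  shows "(apt n (I \<union> J) \<longrightarrow> tl0_null n n (\<lambda>u. basis (Cmp (c_I I n) (c_I J n)) u - basis (c_I (I \<union> J) n) u :: 'k)) \<and>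
         (\<not> apt n (I \<union> J) \<longrightarrow> tl0_null n n (basis (Cmp (c_I I n) (c_I J n)) :: tm \<Rightarrow> 'k))"
proof -
  have gI: "\<forall>j\<in>I. j < n \<and> Suc j \<notin> I" and gJ: "\<forall>j\<in>J. j < n \<and> Suc j \<notin> J"
    using apt_good aI aJ by auto
  have lI: "\<forall>j\<in>I. j<n" and lJ: "\<forall>j\<in>J. j<n" using gI gJ by auto
  have M: "(noconf I J 1 \<longrightarrow> teq (F4 I J n 1) (Cmp (cup_from (I \<union> J) n 1) (cap_from (I \<union> J) n 1))) \<and>
         (\<not> noconf I J 1 \<longrightarrow> tn (F4 I J n 1))"
    by (rule main_step[OF gI gJ])
  have e1: "Cmp (c_I I n) (c_I J n) = F4 I J n 1" unfolding c_I_def cup_I_def cap_I_def F4_def ..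
  have e2: "c_I (I \<union> J) n = Cmp (cup_from (I \<union> J) n 1) (cap_from (I \<union> J) n 1)" unfolding c_I_def cup_I_def cap_I_def ..
  have s: "src (F4 I J n 1) = n" "tgt (F4 I J n 1) = n"
    unfolding F4_def using src_cap[OF lJ] tgt_cup[OF lI] by auto
  show ?thesis
    using M s unfolding e1 e2 apt_noconf[OF aI aJ] teq_def tn_def by auto
qed


end

lemma null_sum: "finite S \<Longrightarrow> (\<And>x. x \<in> S \<Longrightarrow> tl0_null m n (f x)) \<Longrightarrow> tl0_null m n (\<lambda>u. \<Sum>x\<in>S. f x u :: 'k::field)"
proof (induction S rule: finite_induct)
  case empty
  then show ?case using tl0_null.zero by simp
next
  case (insert x F)
  have "tl0_null m n (\<lambda>u. f x u + (\<Sum>y\<in>F. f y u))"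
    by (rule tl0_null.add) (use insert in auto)
  then show ?case using insert by simp
qed

lemma apt_subset: "apt n K \<Longrightarrow> L \<subseteq> K \<Longrightarrow> apt n L"
  unfolding apt_def by blast

lemma fin_apt: "finite {I. apt n I}"
  by (rule finite_subset[of _ "Pow {1..n}"]) (auto simp: apt_def)

lemma apt_finite: "apt n I \<Longrightarrow> finite I"
  unfolding apt_def using finite_subset by blast

lemma inner_zero:
  fixes u :: tm
  assumes aI: "apt n I" and x: "x \<in> I"
  shows "(\<Sum>J\<in>{J. apt n J}. (-1::'k::field) ^ card J * (if apt n (I \<union> J) then basis (c_I (I \<union> J) n) u else 0)) = 0"
proof -
  define g where "g J = (-1::'k) ^ card J * (if apt n (I \<union> J) then basis (c_I (I \<union> J) n) u else 0)" for J
  define A where "A = {J. apt n J}"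
  define A' where "A' = {J\<in>A. apt n (I \<union> J)}"
  define S0 where "S0 = {J\<in>A'. x \<notin> J}"
  define S1 where "S1 = {J\<in>A'. x \<in> J}"
  have fA: "finite A" unfolding A_def by (rule fin_apt)
  have fA': "finite A'" using fA unfolding A'_def by simp
  have "sum g A = sum g A'"
    by (rule sum.mono_neutral_right) (use fA in \<open>auto simp: A'_def g_def\<close>)
  also have "A' = S0 \<union> S1" unfolding S0_def S1_def by auto
  also have "sum g (S0 \<union> S1) = sum g S0 + sum g S1"
    by (rule sum.union_disjoint) (use fA' in \<open>auto simp: S0_def S1_def\<close>)
  also have "sum g S1 = sum (\<lambda>J. g (insert x J)) S0"
  proof (rule sum.reindex_bij_betw[symmetric])
    show "bij_betw (insert x) S0 S1"
    proof (rule bij_betw_imageI)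
      show "inj_on (insert x) S0" unfolding inj_on_def S0_def by (auto simp: insert_ident)
      show "insert x ` S0 = S1"
      proof
        show "insert x ` S0 \<subseteq> S1"
        proof
          fix K assume "K \<in> insert x ` S0"
          then obtain J where J: "J \<in> S0" "K = insert x J" by auto
          have e: "I \<union> insert x J = I \<union> J" using x by auto
          have "apt n (I \<union> J)" using J unfolding S0_def A'_def by auto
          then have "apt n (insert x J)" by (rule apt_subset) (use x in auto)
          then show "K \<in> S1" using J e unfolding S1_def S0_def A'_def A_def by auto
        qed
        show "S1 \<subseteq> insert x ` S0"
        proof
          fix K assume K: "K \<in> S1"
          have e: "I \<union> (K - {x}) = I \<union> K" using x by auto
          have "apt n (K - {x})" by (rule apt_subset[of n K]) (use K in \<open>auto simp: S1_def A'_def A_def\<close>)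
          then have "K - {x} \<in> S0" using K e unfolding S1_def S0_def A'_def A_def by auto
          moreover have "K = insert x (K - {x})" using K unfolding S1_def by auto
          ultimately show "K \<in> insert x ` S0" by blast
        qed
      qed
    qed
  qed
  also have "sum (\<lambda>J. g (insert x J)) S0 = sum (\<lambda>J. - g J) S0"
  proof (rule sum.cong[OF refl])
    fix J assume J: "J \<in> S0"
    have fJ: "finite J" using J apt_finite unfolding S0_def A'_def A_def by auto
    have xJ: "x \<notin> J" using J unfolding S0_def by auto
    have e: "I \<union> insert x J = I \<union> J" using x by auto
    show "g (insert x J) = - g J" unfolding g_def e using fJ xJ by simp
  qed
  also have "sum g S0 + sum (\<lambda>J. - g J) S0 = 0" by (simp add: sum_negf)
  finally show ?thesis unfolding g_def A_def .
qed

theorem mainTheorem1: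
  fixes n :: nat
  shows "tl0_eq n n (lcomp (jw n :: tm \<Rightarrow> 'k::field) (jw n)) (jw n)"
proof -
  define A where "A = {I. apt n I}"
  define a :: "nat set \<Rightarrow> 'k" where "a I = (-1) ^ card I" for I
  define R :: "nat set \<Rightarrow> nat set \<Rightarrow> tm \<Rightarrow> 'k" where
    "R I J u = (if apt n (I \<union> J) then basis (c_I (I \<union> J) n) u else 0)" for I J u
  have fA: "finite A" unfolding A_def by (rule fin_apt)
  have jw: "jw n = (\<lambda>u. \<Sum>I\<in>A. a I * basis (c_I I n) u)" unfolding jw_def A_def a_def ..
  have s1: "lcomp (jw n :: tm \<Rightarrow> 'k) (jw n) = (\<lambda>u. \<Sum>I\<in>A. \<Sum>J\<in>A. a I * a J * basis (Cmp (c_I I n) (c_I J n)) u)"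
  proof
    fix u show "lcomp (jw n :: tm \<Rightarrow> 'k) (jw n) u = (\<Sum>I\<in>A. \<Sum>J\<in>A. a I * a J * basis (Cmp (c_I I n) (c_I J n)) u)"
    proof (cases u)
      case (Cmp x y)
      have "lcomp (jw n :: tm \<Rightarrow> 'k) (jw n) u = (\<Sum>I\<in>A. a I * basis (c_I I n) x) * (\<Sum>J\<in>A. a J * basis (c_I J n) y)"
        unfolding jw Cmp lcomp_def by simp
      also have "\<dots> = (\<Sum>I\<in>A. \<Sum>J\<in>A. (a I * basis (c_I I n) x) * (a J * basis (c_I J n) y))"
        by (rule sum_product)
      also have "\<dots> = (\<Sum>I\<in>A. \<Sum>J\<in>A. a I * a J * basis (Cmp (c_I I n) (c_I J n)) u)"
        unfolding Cmp by (intro sum.cong refl) (simp add: basis_def)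
      finally show ?thesis .
    qed (simp_all add: lcomp_def basis_def)
  qed
  have s3: "(\<lambda>u. \<Sum>I\<in>A. \<Sum>J\<in>A. a I * a J * R I J u) = jw n"
  proof
    fix u
    have inner: "(\<Sum>J\<in>A. a J * R I J u) = (if I = {} then jw n u else 0)" if I: "I \<in> A" for I
    proof (cases "I = {}")
      case True
      have "(\<Sum>J\<in>A. a J * R I J u) = (\<Sum>J\<in>A. a J * basis (c_I J n) u)"
        by (rule sum.cong[OF refl]) (simp add: R_def True A_def)
      then show ?thesis using True jw by simp
    next
      case False
      then obtain x where x: "x \<in> I" by auto
      have "(\<Sum>J\<in>A. a J * R I J u) = 0"
        using inner_zero[OF _ x, of n u] I unfolding A_def a_def R_def by simp
      then show ?thesis using False by simp
    qed
    have "(\<Sum>I\<in>A. \<Sum>J\<in>A. a I * a J * R I J u) = (\<Sum>I\<in>A. a I * (\<Sum>J\<in>A. a J * R I J u))"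
      by (simp add: sum_distrib_left mult.assoc)
    also have "\<dots> = (\<Sum>I\<in>A. a I * (if I = {} then jw n u else 0))"
      by (rule sum.cong[OF refl]) (simp add: inner)
    also have "\<dots> = (\<Sum>I\<in>A. if I = {} then a I * jw n u else 0)"
      by (rule sum.cong[OF refl]) simp
    also have "\<dots> = a {} * jw n u"
      using fA by (simp add: sum.delta A_def apt_def)
    also have "\<dots> = jw n u" by (simp add: a_def)
    finally show "(\<Sum>I\<in>A. \<Sum>J\<in>A. a I * a J * R I J u) = jw n u" .
  qed
  have N: "tl0_null n n (\<lambda>u. \<Sum>I\<in>A. \<Sum>J\<in>A. a I * a J * (basis (Cmp (c_I I n) (c_I J n)) u - R I J u))"
  proof (rule null_sum[OF fA])
    fix I assume I: "I \<in> A"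
    show "tl0_null n n (\<lambda>u. \<Sum>J\<in>A. a I * a J * (basis (Cmp (c_I I n) (c_I J n)) u - R I J u))"
    proof (rule null_sum[OF fA])
      fix J assume J: "J \<in> A"
      have P: "(apt n (I \<union> J) \<longrightarrow> tl0_null n n (\<lambda>u. basis (Cmp (c_I I n) (c_I J n)) u - basis (c_I (I \<union> J) n) u :: 'k)) \<and>
         (\<not> apt n (I \<union> J) \<longrightarrow> tl0_null n n (basis (Cmp (c_I I n) (c_I J n)) :: tm \<Rightarrow> 'k))"
        by (rule pair) (use I J in \<open>simp_all add: A_def\<close>)
      have "tl0_null n n (\<lambda>u. basis (Cmp (c_I I n) (c_I J n)) u - R I J u)"
        using P by (cases "apt n (I \<union> J)") (simp_all add: R_def)
      from tl0_null.smult[OF this, of "a I * a J"]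
      show "tl0_null n n (\<lambda>u. a I * a J * (basis (Cmp (c_I I n) (c_I J n)) u - R I J u))" .
    qed
  qed
  have eq: "(\<lambda>u. lcomp (jw n :: tm \<Rightarrow> 'k) (jw n) u - jw n u) =
     (\<lambda>u. \<Sum>I\<in>A. \<Sum>J\<in>A. a I * a J * (basis (Cmp (c_I I n) (c_I J n)) u - R I J u))"
  proof
    fix u
    have "jw n u = (\<Sum>I\<in>A. \<Sum>J\<in>A. a I * a J * R I J u)" using fun_cong[OF s3, of u] by simp
    then show "lcomp (jw n :: tm \<Rightarrow> 'k) (jw n) u - jw n u =
      (\<Sum>I\<in>A. \<Sum>J\<in>A. a I * a J * (basis (Cmp (c_I I n) (c_I J n)) u - R I J u))"
      unfolding s1 by (simp add: right_diff_distrib sum_subtractf)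
  qed
  show ?thesis unfolding tl0_eq_def eq by (rule N)
qed

end
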